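(* Let $\{w_t\}$, $\{z_t\}$, $\{v_t\}$, $\{\hat D_t\}$ be generated by {\tt Scaled L-SVRG} with step-size $\eta>0$ and probability $p\in(0,1]$. Then for every $t\ge0$ and every $B>0$, $$\mathbb{E}_t\left[\|w_{t+1}-z_{t+1}\|^2\right]\le\frac{\eta^2}{\alpha}\mathbb{E}_t\left[\|v_t\|^2_{\hat D_t^{-1}}\right]+(1-p)(1+\eta B)\|w_t-z_t\|^2+(1-p)\frac{\eta}{\alpha B}\|\nabla P(w_t)\|^2_{\hat D_t^{-1}}.$$
   Context: $P=\frac1n\sum_{i=1}^nf_i$ with twice differentiable $f_i:\mathbb{R}^d\to\mathbb{R}$. $\|x\|_D^2=x^TDx$. For $J\subseteq[n]$, $\nabla^2P_J(w)=\frac1{|J|}\sum_{j\in J}\nabla^2 f_j(w)$; $\odot$ is the Hadamard product; $\mathrm{diag}(x)$ is the diagonal matrix with the entries of $x$. Preconditioner (parameters $\alpha>0$, $\beta\in(0,1)$, $m\ge1$): $D_0=\frac1m\sum_{j=1}^m\mathrm{diag}(z'_j\odot\nabla^2P_{\mathcal{J}_j}(w_0)z'_j)$, $D_t=\beta D_{t-1}+(1-\beta)\mathrm{diag}(z'_t\odot\nabla^2P_{\mathcal{J}_t}(w_t)z'_t)$ for $t\ge1$, with independent Rademacher vectors $z'$ and random index sets $\mathcal{J}\subseteq[n]$, independent of the gradient samples; $\hat D_t$ diagonal with $(\hat D_t)_{ii}=\max\{\alpha,|(D_t)_{ii}|\}$. {\tt Scaled L-SVRG}: $z_0=w_0$,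 $v_0=\nabla P(w_0)$; for $t\ge0$: $w_{t+1}=w_t-\eta\hat D_t^{-1}v_t$; $z_{t+1}=w_t$ with probability $p$ and $z_{t+1}=z_t$ with probability $1-p$; draw $i_{t+1}$ uniformly from $[n]$ independently; $v_{t+1}=\nabla f_{i_{t+1}}(w_{t+1})-\nabla f_{i_{t+1}}(z_{t+1})+\nabla P(z_{t+1})$; update $\hat D_{t+1}$. $\mathbb{E}_t$ denotes conditional expectation given $w_t$, $z_t$ and $\hat D_t$ (the remaining randomness being the index used in $v_t$ and the coin flip defining $z_{t+1}$). *)

theory Defs
  imports "HOL-Analysis.Analysis" "HOL-Probability.Probability"
begin

definition diag_mat :: "real^'n \<Rightarrow> real^'n^'n" where
  "diag_mat x = (\<chi> i j. if i = j then x $ i else 0)"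

definition Dnorm_sq :: "real^'n^'n \<Rightarrow> real^'n \<Rightarrow> real" where
  "Dnorm_sq D x = x \<bullet> (D *v x)"

text \<open>Clipped preconditioner: (Dhat)_ii = max alpha |D_ii|, D given by its diagonal d.\<close>
definition Dhat :: "real \<Rightarrow> real^'n \<Rightarrow> real^'n^'n" where
  "Dhat \<alpha> d = diag_mat (\<chi> i. max \<alpha> \<bar>d $ i\<bar>)"

end

theory Submission
  imports Defs
begin

lemma matrix_inv_eq:
  fixes A B :: "real^'n^'n"
  assumes "A ** B = mat 1" "B ** A = mat 1"
  shows "matrix_inv A = B"
proof -
  have ex: "\<exists>A'. A ** A' = mat 1 \<and> A' ** A = mat 1" using assms by blast
  let ?C = "matrix_inv A"
  have C: "A ** ?C = mat 1 \<and> ?C ** A = mat 1"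
    unfolding matrix_inv_def by (rule someI_ex[OF ex])
  have "?C = (B ** A) ** ?C" using assms by (simp add: matrix_mul_lid)
  also have "\<dots> = B ** (A ** ?C)" by (simp add: matrix_mul_assoc)
  also have "\<dots> = B" using C by (simp add: matrix_mul_rid)
  finally show ?thesis .
qed

lemma diag_mul: "diag_mat (a::real^'n) ** diag_mat b = diag_mat (\<chi> i. a$i * b$i)"
proof -
  have e: "\<And>c (u::real) v. (if c then u else 0) * v = (if c then u * v else 0)" by simp
  show ?thesis by (simp add: diag_mat_def matrix_matrix_mult_def vec_eq_iff e)
qed

lemma diag_mv: "diag_mat (a::real^'n) *v x = (\<chi> i. a$i * x$i)"
proof -
  have e: "\<And>c (u::real) v. (if c then u else 0) * v = (if c then u * v else 0)" by simp
  show ?thesis by (simp add: diag_mat_def matrix_vector_mult_def vec_eq_iff e)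
qed

lemma mat1_diag: "(mat 1 :: real^'n^'n) = diag_mat (\<chi> i. 1)"
  by (simp add: diag_mat_def mat_def vec_eq_iff)

lemma expect_M:
  fixes h :: "nat \<times> bool \<Rightarrow> real"
  assumes "n \<ge> 1" "0 < p" "p \<le> 1"
  shows "measure_pmf.expectation (pair_pmf (pmf_of_set {..<n}) (bernoulli_pmf p)) h
     = (\<Sum>i<n. p * h (i, True) + (1 - p) * h (i, False)) / real n"
proof -
  have "0 \<in> {..<n}" using assms by auto
  hence ne: "{..<n} \<noteq> {}" by blast
  have "measure_pmf.expectation (pair_pmf (pmf_of_set {..<n}) (bernoulli_pmf p)) h
     = (\<Sum>a\<in>{..<n} \<times> UNIV. h a * pmf (pair_pmf (pmf_of_set {..<n}) (bernoulli_pmf p)) a)"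
    by (rule integral_measure_pmf_real) (use ne in \<open>auto simp: set_pair_pmf\<close>)
  also have "\<dots> = (\<Sum>i<n. \<Sum>b\<in>UNIV. h (i,b) * (pmf (pmf_of_set {..<n}) i * pmf (bernoulli_pmf p) b))"
    by (simp add: sum.cartesian_product split_def) (metis pmf_pair prod.collapse)
  also have "\<dots> = (\<Sum>i<n. (p * h (i, True) + (1 - p) * h (i, False)) / real n)"
    using ne assms by (intro sum.cong) (auto simp: UNIV_bool field_simps)
  finally show ?thesis by (simp add: sum_divide_distrib)
qed

lemma norm_sq_comp: "(norm (x::real^'n))\<^sup>2 = (\<Sum>j\<in>UNIV. (x$j)\<^sup>2)"
proof -
  have "(norm x)\<^sup>2 = x \<bullet> x" by (rule power2_norm_eq_inner)
  also have "\<dots> = (\<Sum>j\<in>UNIV. x$j * x$j)" by (simp only: inner_vec_def inner_real_def)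
  finally show ?thesis by (simp add: power2_eq_square)
qed

lemma inner_comp: "(x::real^'n) \<bullet> y = (\<Sum>j\<in>UNIV. x$j * y$j)"
  by (simp add: inner_vec_def)

lemma grad_avg:
  fixes f :: "nat \<Rightarrow> real^'d \<Rightarrow> real" and g :: "nat \<Rightarrow> real^'d \<Rightarrow> real^'d"
  assumes n: "n \<ge> 1"
    and grad_f: "\<forall>i<n. \<forall>x. (f i has_derivative (\<lambda>h. g i x \<bullet> h)) (at x)"
    and grad_P: "\<forall>x. ((\<lambda>y. (\<Sum>i<n. f i y) / real n) has_derivative (\<lambda>h. gP x \<bullet> h)) (at x)"
  shows "gP x = (1 / real n) *\<^sub>R (\<Sum>i<n. g i x)"
proof -
  let ?q = "(1 / real n) *\<^sub>R (\<Sum>i<n. g i x)"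
  have "((\<lambda>y. \<Sum>i<n. f i y) has_derivative (\<lambda>h. \<Sum>i<n. g i x \<bullet> h)) (at x)"
    using grad_f by (intro has_derivative_sum) auto
  hence "((\<lambda>y. (1 / real n) * (\<Sum>i<n. f i y)) has_derivative (\<lambda>h. (1 / real n) * (\<Sum>i<n. g i x \<bullet> h))) (at x)"
    by (rule has_derivative_mult_right)
  hence d2: "((\<lambda>y. (\<Sum>i<n. f i y) / real n) has_derivative (\<lambda>h. ?q \<bullet> h)) (at x)"
    by (simp add: inner_sum_left)
  have "(\<lambda>h. gP x \<bullet> h) = (\<lambda>h. ?q \<bullet> h)"
    using has_derivative_unique[OF grad_P[rule_format, of x] d2] .
  hence "gP x \<bullet> (gP x - ?q) = ?q \<bullet> (gP x - ?q)" by metis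
  hence "(gP x - ?q) \<bullet> (gP x - ?q) = 0" by (simp add: inner_diff_left)
  thus ?thesis by simp
qed

lemma young_comp:
  fixes a G c :: real
  assumes "c > 0" "c \<le> 1 / \<alpha>" "\<alpha> > 0" "B > 0"
  shows "- 2 * (a * (c * G)) \<le> B * a\<^sup>2 + 1 / (\<alpha> * B) * (c * G\<^sup>2)"
proof -
  have "0 \<le> (B * a + c * G)\<^sup>2" by simp
  hence "- 2 * B * (a * (c * G)) \<le> B\<^sup>2 * a\<^sup>2 + c\<^sup>2 * G\<^sup>2" by (simp add: power2_eq_square algebra_simps)
  moreover have "c\<^sup>2 * G\<^sup>2 \<le> c * G\<^sup>2 / \<alpha>"
  proof -
    have "c * c \<le> c * (1/\<alpha>)" using assms by (intro mult_left_mono) auto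
    hence "c\<^sup>2 \<le> c / \<alpha>" by (simp add: power2_eq_square)
    hence "c\<^sup>2 * G\<^sup>2 \<le> (c / \<alpha>) * G\<^sup>2" by (rule mult_right_mono) simp
    thus ?thesis by simp
  qed
  ultimately have "- 2 * B * (a * (c * G)) \<le> B\<^sup>2 * a\<^sup>2 + c * G\<^sup>2 / \<alpha>" by linarith
  hence "(- 2 * B * (a * (c * G))) / B \<le> (B\<^sup>2 * a\<^sup>2 + c * G\<^sup>2 / \<alpha>) / B"
    using assms by (intro divide_right_mono) auto
  also have "(B\<^sup>2 * a\<^sup>2 + c * G\<^sup>2 / \<alpha>) / B = B * a\<^sup>2 + 1 / (\<alpha> * B) * (c * G\<^sup>2)"
    using assms by (simp add: field_simps power2_eq_square)
  finally show ?thesis using assms by simp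
qed

theorem lemma5:
  fixes f :: "nat \<Rightarrow> real^'d \<Rightarrow> real"
    and g :: "nat \<Rightarrow> real^'d \<Rightarrow> real^'d"
    and gP :: "real^'d \<Rightarrow> real^'d"
    and n :: nat and \<alpha> \<eta> p B :: real
    and w z d :: "real^'d"
  assumes n: "n \<ge> 1"
    and grad_f: "\<forall>i<n. \<forall>x. (f i has_derivative (\<lambda>h. g i x \<bullet> h)) (at x)"
    and twice: "\<forall>i<n. \<forall>x. g i differentiable (at x)"
    and grad_P: "\<forall>x. ((\<lambda>y. (\<Sum>i<n. f i y) / real n) has_derivative (\<lambda>h. gP x \<bullet> h)) (at x)"
    and alpha: "\<alpha> > 0" and eta: "\<eta> > 0" and p: "0 < p" "p \<le> 1" and B: "B > 0"
  shows
    "let Dh = Dhat \<alpha> d;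
         Di = matrix_inv Dh;
         v = (\<lambda>i. g i w - g i z + gP z);
         w' = (\<lambda>i. w - \<eta> *\<^sub>R (Di *v v i));
         M = pair_pmf (pmf_of_set {..<n}) (bernoulli_pmf p)
     in measure_pmf.expectation M (\<lambda>(i, b). (norm (w' i - (if b then w else z)))\<^sup>2)
        \<le> \<eta>\<^sup>2 / \<alpha> * measure_pmf.expectation M (\<lambda>(i, b). Dnorm_sq Di (v i))
          + (1 - p) * (1 + \<eta> * B) * (norm (w - z))\<^sup>2
          + (1 - p) * (\<eta> / (\<alpha> * B)) * Dnorm_sq Di (gP w)"
proof -
  define m where "m = (\<chi> j. max \<alpha> \<bar>d$j\<bar>)"
  define c where "c = (\<chi> j. 1 / m$j)"
  have mge: "\<And>j. m$j \<ge> \<alpha>" by (simp add: m_def)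
  have mpos: "\<And>j. m$j > 0" using mge alpha by (meson less_le_trans)
  have cpos: "\<And>j. c$j > 0" using mpos by (simp add: c_def)
  have cle: "\<And>j. c$j \<le> 1/\<alpha>" using mge alpha by (simp add: c_def frac_le)
  have Dh: "Dhat \<alpha> d = diag_mat m" by (simp add: Dhat_def m_def)
  have Di: "matrix_inv (Dhat \<alpha> d) = diag_mat c"
    unfolding Dh using mpos
    by (intro matrix_inv_eq) (simp_all add: diag_mul mat1_diag c_def vec_eq_iff less_imp_neq[symmetric])
  have mv: "\<And>x. diag_mat c *v x = (\<chi> j. c$j * x$j)" by (rule diag_mv)
  have Dn: "\<And>x. Dnorm_sq (diag_mat c) x = (\<Sum>j\<in>UNIV. c$j * (x$j)\<^sup>2)"
    by (simp add: Dnorm_sq_def mv inner_comp power2_eq_square mult.assoc mult.left_commute)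
  define v where "v = (\<lambda>i. g i w - g i z + gP z)"
  define u where "u = (\<lambda>i. diag_mat c *v v i)"
  define a where "a = w - z"
  define G where "G = gP w"
  have nR: "real n > 0" using n by simp
  have ga: "\<And>x. (\<Sum>i<n. g i x) = real n *\<^sub>R gP x"
    using grad_avg[OF n grad_f grad_P] nR by simp
  have vsum: "(\<Sum>i<n. v i) = real n *\<^sub>R G"
  proof -
    have "(of_nat n :: real^'d) * gP z = real n *\<^sub>R gP z" by (simp add: vec_eq_iff of_nat_index)
    thus ?thesis by (simp add: v_def sum.distrib sum_subtractf ga G_def)
  qed
  have usum: "(\<Sum>i<n. u i) = real n *\<^sub>R (diag_mat c *v G)"
  proof -
    have "(\<Sum>i<n. u i) $ j = (real n *\<^sub>R (diag_mat c *v G)) $ j" for j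
    proof -
      have "(\<Sum>i<n. u i) $ j = (\<Sum>i<n. c$j * v i $ j)" by (simp add: u_def mv sum_component)
      also have "\<dots> = c$j * (\<Sum>i<n. v i) $ j" by (simp add: sum_distrib_left sum_component)
      finally show ?thesis by (simp add: vsum mv)
    qed
    thus ?thesis by (simp add: vec_eq_iff)
  qed
  define X where "X = a \<bullet> (diag_mat c *v G)"
  have sumin: "(\<Sum>i<n. a \<bullet> u i) = real n * X"
    by (simp add: inner_sum_right[symmetric] usum X_def)
  define S1 where "S1 = (\<Sum>i<n. (norm (u i))\<^sup>2)"
  define S2 where "S2 = (\<Sum>i<n. Dnorm_sq (diag_mat c) (v i))"
  have bnd1: "(norm (diag_mat c *v x))\<^sup>2 \<le> 1/\<alpha> * Dnorm_sq (diag_mat c) x" for x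
  proof -
    have "(norm (diag_mat c *v x))\<^sup>2 = (\<Sum>j\<in>UNIV. (c$j * x$j)\<^sup>2)" by (simp add: norm_sq_comp mv)
    also have "\<dots> \<le> (\<Sum>j\<in>UNIV. 1/\<alpha> * (c$j * (x$j)\<^sup>2))"
    proof (rule sum_mono)
      fix j
      have "c$j * c$j \<le> (1/\<alpha>) * c$j" using cle[of j] cpos[of j] by (intro mult_right_mono) auto
      hence "(c$j * c$j) * (x$j)\<^sup>2 \<le> ((1/\<alpha>) * c$j) * (x$j)\<^sup>2" by (rule mult_right_mono) simp
      thus "(c$j * x$j)\<^sup>2 \<le> 1/\<alpha> * (c$j * (x$j)\<^sup>2)" by (simp add: power2_eq_square algebra_simps)
    qed
    also have "\<dots> = 1/\<alpha> * Dnorm_sq (diag_mat c) x" by (simp add: Dn sum_distrib_left)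
    finally show ?thesis .
  qed
  have S12: "S1 \<le> 1/\<alpha> * S2"
    unfolding S1_def S2_def u_def sum_distrib_left by (rule sum_mono) (rule bnd1)
  have bnd2: "- 2 * X \<le> B * (norm a)\<^sup>2 + 1/(\<alpha>*B) * Dnorm_sq (diag_mat c) G"
  proof -
    have "- 2 * X = (\<Sum>j\<in>UNIV. - 2 * (a$j * (c$j * G$j)))"
      by (simp add: X_def inner_comp mv sum_distrib_left)
    also have "\<dots> \<le> (\<Sum>j\<in>UNIV. B * (a$j)\<^sup>2 + 1/(\<alpha>*B) * (c$j * (G$j)\<^sup>2))"
      by (rule sum_mono) (rule young_comp[OF cpos cle alpha B])
    also have "\<dots> = B * (norm a)\<^sup>2 + 1/(\<alpha>*B) * Dnorm_sq (diag_mat c) G"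
      by (simp add: sum.distrib sum_distrib_left norm_sq_comp Dn)
    finally show ?thesis .
  qed
  have pt: "p * (norm (w - \<eta> *\<^sub>R u i - w))\<^sup>2 + (1-p) * (norm (w - \<eta> *\<^sub>R u i - z))\<^sup>2
      = \<eta>\<^sup>2 * (norm (u i))\<^sup>2 + (1-p) * (norm a)\<^sup>2 - 2 * (1-p) * \<eta> * (a \<bullet> u i)" for i
  proof -
    have e1: "(norm (w - \<eta> *\<^sub>R u i - w))\<^sup>2 = \<eta>\<^sup>2 * (norm (u i))\<^sup>2"
      by (simp add: power_mult_distrib)
    have ee: "w - \<eta> *\<^sub>R u i - z = a - \<eta> *\<^sub>R u i" by (simp add: a_def)
    have e3: "(norm (a - \<eta> *\<^sub>R u i))\<^sup>2 = (norm a)\<^sup>2 - 2 * \<eta> * (a \<bullet> u i) + \<eta>\<^sup>2 * (norm (u i))\<^sup>2"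
      unfolding power2_norm_eq_inner
      by (simp add: inner_diff_left inner_diff_right inner_commute algebra_simps power2_eq_square)
    have e2: "(norm (w - \<eta> *\<^sub>R u i - z))\<^sup>2 = (norm a)\<^sup>2 - 2 * \<eta> * (a \<bullet> u i) + \<eta>\<^sup>2 * (norm (u i))\<^sup>2"
      unfolding ee by (rule e3)
    show ?thesis unfolding e1 e2 by (simp add: algebra_simps)
  qed
  have LHS: "measure_pmf.expectation (pair_pmf (pmf_of_set {..<n}) (bernoulli_pmf p))
      (\<lambda>(i, b). (norm (w - \<eta> *\<^sub>R u i - (if b then w else z)))\<^sup>2)
      = (\<eta>\<^sup>2 * S1 + real n * ((1-p) * (norm a)\<^sup>2) - 2 * (1-p) * \<eta> * (real n * X)) / real n"
  proof -
    have "measure_pmf.expectation (pair_pmf (pmf_of_set {..<n}) (bernoulli_pmf p))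
      (\<lambda>(i, b). (norm (w - \<eta> *\<^sub>R u i - (if b then w else z)))\<^sup>2)
      = (\<Sum>i<n. p * (norm (w - \<eta> *\<^sub>R u i - w))\<^sup>2 + (1-p) * (norm (w - \<eta> *\<^sub>R u i - z))\<^sup>2) / real n"
      by (simp only: expect_M[OF n p] prod.case if_True if_False)
    also have "\<dots> = (\<Sum>i<n. \<eta>\<^sup>2 * (norm (u i))\<^sup>2 + (1-p) * (norm a)\<^sup>2 - 2 * (1-p) * \<eta> * (a \<bullet> u i)) / real n"
      by (simp only: pt)
    also have "(\<Sum>i<n. \<eta>\<^sup>2 * (norm (u i))\<^sup>2 + (1-p) * (norm a)\<^sup>2 - 2 * (1-p) * \<eta> * (a \<bullet> u i))
       = \<eta>\<^sup>2 * S1 + real n * ((1-p) * (norm a)\<^sup>2) - 2 * (1-p) * \<eta> * (real n * X)"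
      by (simp only: sum.distrib sum_subtractf sum_distrib_left[symmetric] S1_def sumin[symmetric] sum_constant card_lessThan) simp
    finally show ?thesis .
  qed
  have RHS1: "measure_pmf.expectation (pair_pmf (pmf_of_set {..<n}) (bernoulli_pmf p))
      (\<lambda>(i, b). Dnorm_sq (diag_mat c) (v i)) = S2 / real n"
    by (simp add: expect_M[OF n p] S2_def algebra_simps)
  have i1: "\<eta>\<^sup>2 * S1 / real n \<le> \<eta>\<^sup>2 / \<alpha> * (S2 / real n)"
  proof -
    have "\<eta>\<^sup>2 / real n * S1 \<le> \<eta>\<^sup>2 / real n * (1/\<alpha> * S2)"
      using S12 nR by (intro mult_left_mono) auto
    thus ?thesis by (simp add: mult.commute)
  qed
  have i2: "(1-p) * \<eta> * (- 2 * X) \<le> (1-p) * \<eta> * (B * (norm a)\<^sup>2 + 1/(\<alpha>*B) * Dnorm_sq (diag_mat c) G)"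
    using bnd2 p eta by (intro mult_left_mono) auto
  have L2: "(\<eta>\<^sup>2 * S1 + real n * ((1-p) * (norm a)\<^sup>2) - 2 * (1-p) * \<eta> * (real n * X)) / real n
     = \<eta>\<^sup>2 * S1 / real n + (1-p) * (norm a)\<^sup>2 + (1-p) * \<eta> * (- 2 * X)"
    using nR by (simp add: field_simps)
  have eqL: "(\<lambda>(i, b). (norm (w - \<eta> *\<^sub>R (diag_mat c *v (g i w - g i z + gP z)) - (if b then w else z)))\<^sup>2)
     = (\<lambda>(i, b). (norm (w - \<eta> *\<^sub>R u i - (if b then w else z)))\<^sup>2)" by (simp add: u_def v_def)
  have eqR: "(\<lambda>(i, b). Dnorm_sq (diag_mat c) (g i w - g i z + gP z)) = (\<lambda>(i, b). Dnorm_sq (diag_mat c) (v i))"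
    by (simp add: v_def)
  have r: "(1-p)*(1+\<eta>*B)*(norm a)\<^sup>2 + (1-p)*(\<eta>/(\<alpha>*B))*Dnorm_sq (diag_mat c) G
     = (1-p)*(norm a)\<^sup>2 + (1-p) * \<eta> * (B * (norm a)\<^sup>2 + 1/(\<alpha>*B) * Dnorm_sq (diag_mat c) G)"
    by (simp add: algebra_simps)
  have wz: "w - z = a" and gw: "gP w = G" by (simp_all add: a_def G_def)
  show ?thesis
    unfolding Let_def Di eqL eqR LHS RHS1 L2 wz gw
    using i1 i2 r by linarith
qed

end
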